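(* Let $S\subseteq\mathbb{N}[x]^n$. Then the set of minimal elements of $S$ with respect to the partial order $\preceq$ is finite.
   Context: For $f=\sum_{i}f_ix^i,g=\sum_ig_ix^i\in\mathbb{N}[x]$, with coefficients padded by zeros up to a common index $K$ exceeding both degrees, $f\preceq g$ iff $\sum_{j=i}^Kf_j\le\sum_{j=i}^Kg_j$ for all $i=0,\ldots,K$. For $\mathbf{u}=(u_1,\ldots,u_n),\mathbf{v}=(v_1,\ldots,v_n)\in\mathbb{N}[x]^n$, $\mathbf{u}\preceq\mathbf{v}$ iff $u_i\preceq v_i$ for all $i$. *)

theory Defs
  imports "HOL-Computational_Algebra.Polynomial"
begin

definition poly_tail_le :: "nat poly \<Rightarrow> nat poly \<Rightarrow> bool" where
  "poly_tail_le f g \<longleftrightarrow>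
     (let K = Suc (max (degree f) (degree g)) in
      \<forall>i\<le>K. (\<Sum>j=i..K. coeff f j) \<le> (\<Sum>j=i..K. coeff g j))"

definition vec_tail_le :: "nat poly list \<Rightarrow> nat poly list \<Rightarrow> bool" where
  "vec_tail_le u v \<longleftrightarrow> length u = length v \<and>
     (\<forall>i<length u. poly_tail_le (u ! i) (v ! i))"

definition minimal_elements :: "nat poly list set \<Rightarrow> nat poly list set" where
  "minimal_elements S = {u \<in> S. \<not> (\<exists>v\<in>S. vec_tail_le v u \<and> v \<noteq> u)}"

end

theory Submission
  imports Defs "HOL-Library.Infinite_Set"
begin

definition gd_on :: "('a \<Rightarrow> 'a \<Rightarrow> bool) \<Rightarrow> 'a set \<Rightarrow> bool" where
  "gd_on P A \<longleftrightarrow> (\<forall>f::nat \<Rightarrow> 'a. (\<forall>i. f i \<in> A) \<longrightarrow> (\<exists>i j. i < j \<and> P (f i) (f j)))"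

definition msq_on :: "('a \<Rightarrow> 'a \<Rightarrow> bool) \<Rightarrow> 'a set \<Rightarrow> bool" where
  "msq_on P A \<longleftrightarrow> (\<forall>f::nat \<Rightarrow> 'a. (\<forall>i. f i \<in> A) \<longrightarrow>
     (\<exists>h::nat \<Rightarrow> nat. strict_mono h \<and> (\<forall>i j. i < j \<longrightarrow> P (f (h i)) (f (h j)))))"

lemma good_ms:
  assumes "gd_on P A" and tr: "\<And>x y z. x \<in> A \<Longrightarrow> y \<in> A \<Longrightarrow> z \<in> A \<Longrightarrow> P x y \<Longrightarrow> P y z \<Longrightarrow> P x z"
  shows "msq_on P A"
  unfolding msq_on_def
proof (intro allI impI)
  fix f :: "nat \<Rightarrow> _" assume fA: "\<forall>i. f i \<in> A"
  define T where "T = {i. \<forall>j>i. \<not> P (f i) (f j)}"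
  have "finite T"
  proof (rule ccontr)
    assume inf: "infinite T"
    define e where "e = enumerate T"
    have "\<forall>i. (f \<circ> e) i \<in> A" using fA by simp
    then obtain i j where ij: "i < j" "P (f (e i)) (f (e j))"
      using assms(1)[unfolded gd_on_def, rule_format, of "f \<circ> e"] by auto
    have "e i < e j" unfolding e_def using enumerate_mono[OF ij(1) inf] .
    moreover have "e i \<in> T" unfolding e_def using enumerate_in_set[OF inf] .
    ultimately show False using ij(2) unfolding T_def by blast
  qed
  then obtain N where N: "\<forall>i\<in>T. i < N" using finite_nat_set_iff_bounded by blast
  have ex: "\<exists>j>i. P (f i) (f j)" if "N \<le> i" for i
    using N that unfolding T_def by force
  define nx where "nx i = (SOME j. j > i \<and> P (f i) (f j))" for i
  have nx: "nx i > i \<and> P (f i) (f (nx i))" if "N \<le> i" for i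
    unfolding nx_def using someI_ex[OF ex[OF that]] .
  define h where "h k = (nx ^^ k) N" for k
  have hN: "N \<le> h k" for k
  proof (induction k)
    case 0 then show ?case by (simp add: h_def)
  next
    case (Suc k) then show ?case using nx[of "h k"] by (simp add: h_def)
  qed
  have hS: "h k < h (Suc k) \<and> P (f (h k)) (f (h (Suc k)))" for k
    using nx[OF hN[of k]] by (simp add: h_def)
  have hm: "strict_mono h" using hS by (simp add: strict_mono_Suc_iff)
  have "P (f (h i)) (f (h j))" if "i < j" for i j
    using that
  proof (induction j)
    case 0 then show ?case by simp
  next
    case (Suc j)
    show ?case
    proof (cases "i = j")
      case True then show ?thesis using hS by simp
    next
      case False
      then have "P (f (h i)) (f (h j))" using Suc by simp
      then show ?thesis using tr[OF fA[rule_format] fA[rule_format] fA[rule_format] _ conjunct2[OF hS[of j]]] by simp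
    qed
  qed
  then show "\<exists>h::nat\<Rightarrow>nat. strict_mono h \<and> (\<forall>i j. i < j \<longrightarrow> P (f (h i)) (f (h j)))"
    using hm by blast
qed

lemma ms_good: "msq_on P A \<Longrightarrow> gd_on P A"
  unfolding msq_on_def gd_on_def
proof (intro allI impI)
  fix f :: "nat \<Rightarrow> _" assume "\<forall>f::nat \<Rightarrow> _. (\<forall>i. f i \<in> A) \<longrightarrow> (\<exists>h::nat\<Rightarrow>nat. strict_mono h \<and> (\<forall>i j. i < j \<longrightarrow> P (f (h i)) (f (h j))))" and fA: "\<forall>i. f i \<in> A"
  then obtain h :: "nat \<Rightarrow> nat" where hh: "strict_mono h" "\<forall>i j. i < j \<longrightarrow> P (f (h i)) (f (h j))"
    by (elim allE[of _ f]) (use fA in blast)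
  have "h 0 < h 1" using hh(1) by (simp add: strict_monoD)
  moreover have "P (f (h 0)) (f (h 1))" using hh(2) by simp
  ultimately show "\<exists>i j. i < j \<and> P (f i) (f j)" by (intro exI[of _ "h 0"] exI[of _ "h 1"]) simp
qed

lemma good_pullback:
  assumes "gd_on Q B" "\<And>a. a \<in> A \<Longrightarrow> g a \<in> B"
    "\<And>a b. a \<in> A \<Longrightarrow> b \<in> A \<Longrightarrow> Q (g a) (g b) \<Longrightarrow> P a b"
  shows "gd_on P A"
  unfolding gd_on_def
proof (intro allI impI)
  fix f :: "nat \<Rightarrow> _" assume fA: "\<forall>i. f i \<in> A"
  then have "\<forall>i. (g \<circ> f) i \<in> B" using assms(2) by simp
  then obtain i j where "i < j" "Q (g (f i)) (g (f j))" using assms(1)[unfolded gd_on_def, rule_format, of "\<lambda>i. g (f i)"] by auto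
  moreover have "P (f i) (f j)" using assms(3) fA \<open>Q (g (f i)) (g (f j))\<close> by simp
  ultimately show "\<exists>i j. i < j \<and> P (f i) (f j)" by blast
qed

lemma good_nat: "gd_on (\<le>) (UNIV :: nat set)"
  unfolding gd_on_def
proof (intro allI impI)
  fix f :: "nat \<Rightarrow> nat"
  obtain i where "\<forall>y. f i \<le> f y" using ex_has_least_nat[of "\<lambda>_. True" 0 f] by auto
  then show "\<exists>i j. i < j \<and> f i \<le> f j" by (intro exI[of _ i] exI[of _ "Suc i"]) auto
qed

lemma ms_list:
  assumes "msq_on P A"
  shows "msq_on (list_all2 P) {xs. length xs = m \<and> set xs \<subseteq> A}"
proof (induction m)
  case 0
  show ?case unfolding msq_on_def
  proof (intro allI impI)
    fix f :: "nat \<Rightarrow> _" assume "\<forall>i. f i \<in> {xs. length xs = 0 \<and> set xs \<subseteq> A}"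
    then have "f i = []" for i by simp
    then show "\<exists>h::nat\<Rightarrow>nat. strict_mono h \<and> (\<forall>i j. i < j \<longrightarrow> list_all2 P (f (h i)) (f (h j)))"
      by (intro exI[of _ id]) (simp add: strict_mono_def)
  qed
next
  case (Suc m)
  show ?case unfolding msq_on_def
  proof (intro allI impI)
    fix f :: "nat \<Rightarrow> _" assume fA: "\<forall>i. f i \<in> {xs. length xs = Suc m \<and> set xs \<subseteq> A}"
    have tA: "\<forall>i. tl (f i) \<in> {xs. length xs = m \<and> set xs \<subseteq> A}"
    proof
      fix i show "tl (f i) \<in> {xs. length xs = m \<and> set xs \<subseteq> A}" using fA[rule_format, of i] by (cases "f i") auto
    qed
    have IH: "\<And>g::nat \<Rightarrow> _. (\<forall>i. g i \<in> {xs. length xs = m \<and> set xs \<subseteq> A}) \<Longrightarrow> (\<exists>h::nat\<Rightarrow>nat. strict_mono h \<and> (\<forall>i j. i < j \<longrightarrow> list_all2 P (g (h i)) (g (h j))))"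
      using Suc unfolding msq_on_def by blast
    obtain h1 :: "nat \<Rightarrow> nat" where h1: "strict_mono h1" "\<forall>i j. i < j \<longrightarrow> list_all2 P (tl (f (h1 i))) (tl (f (h1 j)))"
      using IH[of "\<lambda>i. tl (f i)", OF tA] by blast
    have hA: "\<forall>i. hd (f (h1 i)) \<in> A"
    proof
      fix i show "hd (f (h1 i)) \<in> A" using fA[rule_format, of "h1 i"] by (cases "f (h1 i)") auto
    qed
    have IH2: "\<And>g::nat \<Rightarrow> _. (\<forall>i. g i \<in> A) \<Longrightarrow> (\<exists>h::nat\<Rightarrow>nat. strict_mono h \<and> (\<forall>i j. i < j \<longrightarrow> P (g (h i)) (g (h j))))"
      using assms unfolding msq_on_def by blast
    obtain h2 :: "nat \<Rightarrow> nat" where h2: "strict_mono h2" "\<forall>i j. i < j \<longrightarrow> P (hd (f (h1 (h2 i)))) (hd (f (h1 (h2 j))))"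
      using IH2[of "\<lambda>i. hd (f (h1 i))", OF hA] by blast
    have ne: "f i \<noteq> []" for i
    proof
      assume "f i = []" then show False using fA[rule_format, of i] by simp
    qed
    have "list_all2 P (f (h1 (h2 i))) (f (h1 (h2 j)))" if "i < j" for i j
    proof -
      have "h2 i < h2 j" using strict_monoD[OF h2(1) that] .
      then have t: "list_all2 P (tl (f (h1 (h2 i)))) (tl (f (h1 (h2 j))))" using h1(2) by simp
      have hh: "P (hd (f (h1 (h2 i)))) (hd (f (h1 (h2 j))))" using h2(2) that by simp
      obtain a as where ea: "f (h1 (h2 i)) = a # as" using ne[of "h1 (h2 i)"] by (cases "f (h1 (h2 i))") auto
      obtain b bs where eb: "f (h1 (h2 j)) = b # bs" using ne[of "h1 (h2 j)"] by (cases "f (h1 (h2 j))") auto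
      show ?thesis using t hh unfolding ea eb by simp
    qed
    moreover have "strict_mono (h1 \<circ> h2)" using h1(1) h2(1) by (simp add: strict_mono_def)
    ultimately show "\<exists>h::nat\<Rightarrow>nat. strict_mono h \<and> (\<forall>i j. i < j \<longrightarrow> list_all2 P (f (h i)) (f (h j)))"
      by (intro exI[of _ "h1 \<circ> h2"]) simp
  qed
qed

lemma good_list:
  assumes "gd_on P A" "\<And>x y z. x \<in> A \<Longrightarrow> y \<in> A \<Longrightarrow> z \<in> A \<Longrightarrow> P x y \<Longrightarrow> P y z \<Longrightarrow> P x z"
  shows "gd_on (list_all2 P) {xs. length xs = m \<and> set xs \<subseteq> A}"
  by (rule ms_good[OF ms_list[OF good_ms[OF assms]]])


definition Tl :: "nat poly \<Rightarrow> nat \<Rightarrow> nat" where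
  "Tl p i = (\<Sum>j=i..degree p. coeff p j)"

definition PA :: "(nat \<Rightarrow> nat) set" where
  "PA = {b. (\<forall>i j. i \<le> j \<longrightarrow> b j \<le> b i) \<and> (\<exists>L. \<forall>k\<ge>L. b k = 0)}"

lemma Tl_PA: "Tl p \<in> PA"
proof -
  have "Tl p j \<le> Tl p i" if "i \<le> j" for i j
    unfolding Tl_def using that by (intro sum_mono2) auto
  moreover have "\<forall>k\<ge>Suc (degree p). Tl p k = 0" unfolding Tl_def by auto
  ultimately show ?thesis unfolding PA_def by blast
qed

lemma sum_K_Tl:
  assumes "degree p \<le> K"
  shows "(\<Sum>j=i..K. coeff p j) = Tl p i"
proof -
  have "(\<Sum>j=i..K. coeff p j) = (\<Sum>j=i..degree p. coeff p j)"
  proof (rule sum.mono_neutral_right)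
    show "finite {i..K}" by simp
    show "{i..degree p} \<subseteq> {i..K}" using assms by auto
    show "\<forall>x\<in>{i..K} - {i..degree p}. coeff p x = 0" by (auto intro: coeff_eq_0)
  qed
  then show ?thesis unfolding Tl_def .
qed

lemma poly_le_of_Tl:
  assumes "\<forall>i. Tl f i \<le> Tl g i"
  shows "poly_tail_le f g"
  unfolding poly_tail_le_def Let_def
proof (intro allI impI)
  fix i
  have "(\<Sum>j=i..Suc (max (degree f) (degree g)). coeff f j) = Tl f i" by (rule sum_K_Tl) simp
  moreover have "(\<Sum>j=i..Suc (max (degree f) (degree g)). coeff g j) = Tl g i" by (rule sum_K_Tl) simp
  ultimately show "(\<Sum>j=i..Suc (max (degree f) (degree g)). coeff f j) \<le> (\<Sum>j=i..Suc (max (degree f) (degree g)). coeff g j)"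
    using assms by simp
qed

definition cnt :: "nat \<Rightarrow> (nat \<Rightarrow> nat) \<Rightarrow> nat \<Rightarrow> nat" where
  "cnt L b v = card {k. L \<le> k \<and> v \<le> b k}"

lemma cnt_key:
  assumes "b \<in> PA" "b' \<in> PA" "L \<le> k" "b' k < b k"
  shows "cnt L b' (b k) < cnt L b (b k)"
proof -
  define v where "v = b k"
  have v0: "0 < v" using assms(4) v_def by simp
  obtain Lb where Lb: "\<forall>k\<ge>Lb. b k = 0" using assms(1) unfolding PA_def by blast
  have am: "\<And>i j. i \<le> j \<Longrightarrow> b j \<le> b i" using assms(1) unfolding PA_def by blast
  have am': "\<And>i j. i \<le> j \<Longrightarrow> b' j \<le> b' i" using assms(2) unfolding PA_def by blast
  define S where "S = {k. L \<le> k \<and> v \<le> b k}"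
  have "S \<subseteq> {..<Lb}"
  proof
    fix x assume xS: "x \<in> S"
    show "x \<in> {..<Lb}"
    proof (rule ccontr)
      assume "x \<notin> {..<Lb}"
      then have "Lb \<le> x" by simp
      then have "b x = 0" using Lb by simp
      moreover have "v \<le> b x" using xS by (simp add: S_def)
      ultimately show False using v0 by simp
    qed
  qed
  then have fS: "finite S" using finite_subset[OF _ finite_lessThan] by blast
  have "{L..k} \<subseteq> S"
  proof
    fix x assume "x \<in> {L..k}"
    then show "x \<in> S" unfolding S_def v_def using am[of x k] by simp
  qed
  then have "card {L..k} \<le> card S" by (rule card_mono[OF fS])
  then have c1: "Suc k - L \<le> card S" by simp
  define S' where "S' = {k. L \<le> k \<and> v \<le> b' k}"
  have "S' \<subseteq> {L..<k}"
  proof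
    fix x assume "x \<in> S'"
    then have "L \<le> x" "v \<le> b' x" unfolding S'_def by auto
    moreover have "x < k"
    proof (rule ccontr)
      assume "\<not> x < k"
      then have "b' x \<le> b' k" using am' by simp
      then show False using \<open>v \<le> b' x\<close> assms(4) v_def by simp
    qed
    ultimately show "x \<in> {L..<k}" by simp
  qed
  then have c2: "card S' \<le> k - L" using card_mono[of "{L..<k}" S'] by simp
  have "card S' < card S" using c1 c2 assms(3) by linarith
  then show ?thesis unfolding cnt_def S_def S'_def v_def .
qed

lemma good_B:
  "gd_on (\<lambda>a b. \<forall>i. a i \<le> b i) {b \<in> PA. \<forall>k\<ge>L. b k < M}"
proof (rule good_pullback)
  show "gd_on (list_all2 (\<le>)) {xs :: nat list. length xs = L + M \<and> set xs \<subseteq> UNIV}"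
    by (rule good_list[OF good_nat]) auto
  define g where "g b = map b [0..<L] @ map (cnt L b) [0..<M]" for b
  show "g a \<in> {xs :: nat list. length xs = L + M \<and> set xs \<subseteq> UNIV}" for a
    by (simp add: g_def)
  show "\<forall>i. a i \<le> b i" if ab: "a \<in> {b \<in> PA. \<forall>k\<ge>L. b k < M}" "b \<in> {b \<in> PA. \<forall>k\<ge>L. b k < M}"
    "list_all2 (\<le>) (g a) (g b)" for a b
  proof -
    have "list_all2 (\<le>) (map a [0..<L]) (map b [0..<L])" "list_all2 (\<le>) (map (cnt L a) [0..<M]) (map (cnt L b) [0..<M])"
      using ab(3) unfolding g_def by (simp_all add: list_all2_append)
    then have p1: "\<forall>i<L. a i \<le> b i" and p2: "\<forall>v<M. cnt L a v \<le> cnt L b v"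
      by (auto simp: list_all2_conv_all_nth)
    show ?thesis
    proof
      fix i show "a i \<le> b i"
      proof (rule ccontr)
        assume "\<not> a i \<le> b i"
        then have lt: "b i < a i" by simp
        have "L \<le> i" using p1 lt by (meson not_less leD)
        then have "a i < M" using ab(1) by simp
        moreover have "cnt L b (a i) < cnt L a (a i)"
          using cnt_key[of a b L i] ab(1,2) \<open>L \<le> i\<close> lt by simp
        ultimately show False using p2 by (meson leD)
      qed
    qed
  qed
qed

lemma good_PA: "gd_on (\<lambda>a b. \<forall>i. a i \<le> b i) PA"
  unfolding gd_on_def
proof (intro allI impI)
  fix f :: "nat \<Rightarrow> nat \<Rightarrow> nat" assume fA: "\<forall>i. f i \<in> PA"
  show "\<exists>i j. i < j \<and> (\<forall>k. f i k \<le> f j k)"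
  proof (cases "\<exists>j>0. \<forall>k. f 0 k \<le> f j k")
    case True then show ?thesis by blast
  next
    case False
    obtain L where L: "\<forall>k\<ge>L. f 0 k = 0" using fA unfolding PA_def by blast
    have am: "\<And>j i k. i \<le> k \<Longrightarrow> f j k \<le> f j i" using fA unfolding PA_def by blast
    define M where "M = f 0 0"
    have inB: "f (Suc j) \<in> {b \<in> PA. \<forall>k\<ge>L. b k < M}" for j
    proof -
      obtain i where i: "f (Suc j) i < f 0 i" using False by (metis not_le zero_less_Suc)
      have "i < L" using i L by (metis not_le not_less0)
      have "f (Suc j) k < M" if "L \<le> k" for k
      proof -
        have "f (Suc j) k \<le> f (Suc j) i" using am \<open>i < L\<close> that by simp
        also have "\<dots> < f 0 i" using i .
        also have "\<dots> \<le> f 0 0" using am by simp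
        finally show ?thesis unfolding M_def .
      qed
      then show ?thesis using fA by simp
    qed
    obtain i j where "i < j" "\<forall>k. f (Suc i) k \<le> f (Suc j) k"
      using good_B[of L M, unfolded gd_on_def, rule_format, of "\<lambda>j. f (Suc j)"] inB by blast
    then show ?thesis by (intro exI[of _ "Suc i"] exI[of _ "Suc j"]) auto
  qed
qed

lemma good_vec: "gd_on vec_tail_le {u. length u = n}"
proof (rule good_pullback)
  show "gd_on (list_all2 (\<lambda>a b. \<forall>i. a i \<le> (b i::nat))) {xs. length xs = n \<and> set xs \<subseteq> PA}"
    by (rule good_list[OF good_PA]) (meson order_trans)
  show "map Tl u \<in> {xs. length xs = n \<and> set xs \<subseteq> PA}" if "u \<in> {u. length u = n}" for u
    using that Tl_PA by auto
  show "vec_tail_le u v" if "u \<in> {u. length u = n}" "v \<in> {u. length u = n}"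
    "list_all2 (\<lambda>a b. \<forall>i. a i \<le> b i) (map Tl u) (map Tl v)" for u v
    using that unfolding vec_tail_le_def by (auto simp: list_all2_conv_all_nth intro: poly_le_of_Tl)
qed

theorem lemma4p9:
  fixes S :: "nat poly list set" and n :: nat
  assumes "\<forall>u\<in>S. length u = n"
  shows "finite (minimal_elements S)"
proof (rule ccontr)
  assume inf: "infinite (minimal_elements S)"
  have "\<exists>e::nat \<Rightarrow> nat poly list. inj e \<and> range e \<subseteq> minimal_elements S"
    using inf by (simp only: infinite_iff_countable_subset)
  then obtain e :: "nat \<Rightarrow> nat poly list" where e: "inj e" "range e \<subseteq> minimal_elements S"
    by (elim exE conjE) (rule that)
  have eM: "e i \<in> minimal_elements S" for i using e(2) by (simp add: image_subset_iff)
  have eS: "e i \<in> S" for i using eM[of i] unfolding minimal_elements_def by simp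
  have len: "\<forall>i. e i \<in> {u. length u = n}" using eS assms by simp
  have "\<exists>i j. i < j \<and> vec_tail_le (e i) (e j)"
    using good_vec[unfolded gd_on_def, THEN spec, of e, THEN mp, OF len] .
  then obtain i j where ij: "i < j" "vec_tail_le (e i) (e j)" by (elim exE conjE) (rule that)
  have ne: "e i \<noteq> e j" using e(1) ij(1) by (simp add: inj_eq)
  have "\<not> (\<exists>v\<in>S. vec_tail_le v (e j) \<and> v \<noteq> e j)"
    using eM[of j] unfolding minimal_elements_def by simp
  moreover have "e i \<in> S \<and> vec_tail_le (e i) (e j) \<and> e i \<noteq> e j" using eS ij(2) ne by simp
  ultimately show False by auto
qed

end
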